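(* $\Omega$ is an open subset of $\widehat G$.
   Context: Let $G$ be a metrizable, $\sigma$-compact locally compact abelian group (written additively) with Haar measure $\nu$, and $(Y,\lambda)$ a $\sigma$-finite measure space with $L^2(G,\nu)$, $L^2(Y,\lambda)$ separable. Let $H$ be a reproducing kernel Hilbert space of complex functions on $G\times Y$ whose inner product is that of $L^2(G\times Y,\nu\otimes\lambda)$, with reproducing kernel $(K_{x,y})_{(x,y)\in G\times Y}$. Assume $K_{x,y}(u,v)=K_{0,y}(u-x,v)$ for all $u,x\in G$, $v,y\in Y$, and $\sup_{v\in Y}\int_G|K_{0,y}(u,v)|\,d\nu(u)<\infty$ for every $y\in Y$. Let $\widehat G$ be the dual group of $G$ (with its usual topology). Define $L_{\xi,y}(v)=\int_G K_{0,y}(u,v)\overline{\xi(u)}\,d\nu(u)$ for $\xi\in\widehat G$, $y,v\in Y$, and $\Omega=\{\xi\in\widehat G:\exists y\in Y,\ L_{\xi,y}(y)>0\}$. *)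

theory Defs
  imports "HOL-Analysis.Analysis"
begin

text \<open>A Haar measure on a (metrizable, sigma-compact, locally compact) abelian group:
  a nonzero translation-invariant Borel measure which is finite on compact sets and positive on
  nonempty open sets. (On sigma-compact metrizable locally compact spaces such locally finite Borel
  measures are automatically regular, i.e. Radon.)\<close>

definition haar_measure :: "('g::{topological_ab_group_add, metric_space}) measure \<Rightarrow> bool" where
  "haar_measure \<nu> \<longleftrightarrow>
     sets \<nu> = sets borel \<and>
     (\<forall>K. compact K \<longrightarrow> emeasure \<nu> K < \<infinity>) \<and>
     (\<forall>U. open U \<and> U \<noteq> {} \<longrightarrow> emeasure \<nu> U > 0) \<and>
     (\<forall>x. \<forall>A \<in> sets borel. emeasure \<nu> ((\<lambda>u. x + u) ` A) = emeasure \<nu> A)"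

definition square_integrable :: "'a measure \<Rightarrow> ('a \<Rightarrow> complex) \<Rightarrow> bool" where
  "square_integrable M f \<longleftrightarrow> f \<in> borel_measurable M \<and> integrable M (\<lambda>z. (cmod (f z))\<^sup>2)"

definition L2_dist2 :: "'a measure \<Rightarrow> ('a \<Rightarrow> complex) \<Rightarrow> ('a \<Rightarrow> complex) \<Rightarrow> real" where
  "L2_dist2 M f g = (\<integral>z. (cmod (f z - g z))\<^sup>2 \<partial>M)"

definition L2_separable :: "'a measure \<Rightarrow> bool" where
  "L2_separable M \<longleftrightarrow> (\<exists>D. countable D \<and> (\<forall>d\<in>D. square_integrable M d) \<and>
     (\<forall>f. square_integrable M f \<longrightarrow> (\<forall>e>0. \<exists>d\<in>D. L2_dist2 M f d < e)))"

text \<open>H is a set of (genuine) functions on the space of M, each square integrable, forming a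
  complex linear space which is complete for the L2 norm (so a Hilbert space with the L2 inner
  product); K z is the reproducing kernel at z: K z \<in> H and f z = \<langle>f, K z\<rangle>_{L2} for f \<in> H.\<close>

definition rkhs_L2 :: "'a measure \<Rightarrow> ('a \<Rightarrow> complex) set \<Rightarrow> ('a \<Rightarrow> 'a \<Rightarrow> complex) \<Rightarrow> bool" where
  "rkhs_L2 M H K \<longleftrightarrow>
     (\<forall>f\<in>H. square_integrable M f) \<and>
     (\<lambda>_. 0) \<in> H \<and>
     (\<forall>f\<in>H. \<forall>g\<in>H. (\<lambda>z. f z + g z) \<in> H) \<and>
     (\<forall>c. \<forall>f\<in>H. (\<lambda>z. c * f z) \<in> H) \<and>
     (\<forall>s. (\<forall>n. s n \<in> H) \<and> (\<forall>e>0. \<exists>N. \<forall>m\<ge>N. \<forall>n\<ge>N. L2_dist2 M (s m) (s n) < e)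
          \<longrightarrow> (\<exists>f\<in>H. (\<lambda>n. L2_dist2 M (s n) f) \<longlonglongrightarrow> 0)) \<and>
     (\<forall>z\<in>space M. K z \<in> H) \<and>
     (\<forall>f\<in>H. \<forall>z\<in>space M. f z = (\<integral>w. f w * cnj (K z w) \<partial>M))"

definition dual_group :: "('g::{topological_ab_group_add, metric_space} \<Rightarrow> complex) set" where
  "dual_group = {\<xi>. continuous_on UNIV \<xi> \<and> (\<forall>x. cmod (\<xi> x) = 1) \<and> (\<forall>x y. \<xi> (x + y) = \<xi> x * \<xi> y)}"

text \<open>The usual topology on the dual group: the compact-open topology, i.e. the topology of
  uniform convergence on compact subsets of G.\<close>

definition dual_open :: "('g::{topological_ab_group_add, metric_space} \<Rightarrow> complex) set \<Rightarrow> bool" where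
  "dual_open U \<longleftrightarrow> U \<subseteq> dual_group \<and>
     (\<forall>\<xi>0\<in>U. \<exists>K e. compact K \<and> e > 0 \<and>
        {\<xi>\<in>dual_group. \<forall>x\<in>K. cmod (\<xi> x - \<xi>0 x) < e} \<subseteq> U)"

lemma istopology_dual_open: "istopology dual_open"
  unfolding istopology_def
proof (intro conjI allI impI)
  fix S T :: "('g::{topological_ab_group_add, metric_space} \<Rightarrow> complex) set"
  assume S: "dual_open S" and T: "dual_open T"
  show "dual_open (S \<inter> T)"
    unfolding dual_open_def
  proof (intro conjI ballI)
    show "S \<inter> T \<subseteq> dual_group" using S unfolding dual_open_def by blast
  next
    fix \<xi>0 assume x0: "\<xi>0 \<in> S \<inter> T"
    from x0 have "\<xi>0 \<in> S" by (rule IntD1)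
    with S obtain K1 e1 where 1: "compact K1" "e1 > 0"
        "{\<xi>\<in>dual_group. \<forall>x\<in>K1. cmod (\<xi> x - \<xi>0 x) < e1} \<subseteq> S"
      unfolding dual_open_def by blast
    from x0 have "\<xi>0 \<in> T" by (rule IntD2)
    with T obtain K2 e2 where 2: "compact K2" "e2 > 0"
        "{\<xi>\<in>dual_group. \<forall>x\<in>K2. cmod (\<xi> x - \<xi>0 x) < e2} \<subseteq> T"
      unfolding dual_open_def by blast
    show "\<exists>K e. compact K \<and> e > 0 \<and> {\<xi>\<in>dual_group. \<forall>x\<in>K. cmod (\<xi> x - \<xi>0 x) < e} \<subseteq> S \<inter> T"
    proof (intro exI conjI)
      show "compact (K1 \<union> K2)" using 1(1) 2(1) by (rule compact_Un)
      show "min e1 e2 > 0" using 1(2) 2(2) by simp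
      show "{\<xi>\<in>dual_group. \<forall>x\<in>K1 \<union> K2. cmod (\<xi> x - \<xi>0 x) < min e1 e2} \<subseteq> S \<inter> T"
      proof
        fix \<xi> assume "\<xi> \<in> {\<xi>\<in>dual_group. \<forall>x\<in>K1 \<union> K2. cmod (\<xi> x - \<xi>0 x) < min e1 e2}"
        then have "\<xi> \<in> {\<xi>\<in>dual_group. \<forall>x\<in>K1. cmod (\<xi> x - \<xi>0 x) < e1}"
          and "\<xi> \<in> {\<xi>\<in>dual_group. \<forall>x\<in>K2. cmod (\<xi> x - \<xi>0 x) < e2}"
          by auto
        then show "\<xi> \<in> S \<inter> T" using 1(3) 2(3) by blast
      qed
    qed
  qed
next
  fix \<K> :: "('g::{topological_ab_group_add, metric_space} \<Rightarrow> complex) set set"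
  assume H: "\<forall>S\<in>\<K>. dual_open S"
  show "dual_open (\<Union>\<K>)"
    unfolding dual_open_def
  proof (intro conjI ballI)
    show "\<Union>\<K> \<subseteq> dual_group"
    proof
      fix \<xi> assume "\<xi> \<in> \<Union>\<K>"
      then obtain S where "S \<in> \<K>" "\<xi> \<in> S" by blast
      moreover from H \<open>S \<in> \<K>\<close> have "dual_open S" by (rule bspec)
      ultimately show "\<xi> \<in> dual_group" unfolding dual_open_def by blast
    qed
  next
    fix \<xi>0 assume "\<xi>0 \<in> \<Union>\<K>"
    then obtain S where S: "S \<in> \<K>" "\<xi>0 \<in> S" by blast
    from H S(1) have "dual_open S" by (rule bspec)
    with S(2) obtain K e where "compact K" "e > 0"
        "{\<xi>\<in>dual_group. \<forall>x\<in>K. cmod (\<xi> x - \<xi>0 x) < e} \<subseteq> S"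
      unfolding dual_open_def by blast
    then show "\<exists>K e. compact K \<and> e > 0 \<and>
        {\<xi>\<in>dual_group. \<forall>x\<in>K. cmod (\<xi> x - \<xi>0 x) < e} \<subseteq> \<Union>\<K>"
      using S(1) by blast
  qed
qed

definition dual_topology :: "('g::{topological_ab_group_add, metric_space} \<Rightarrow> complex) topology" where
  "dual_topology = topology dual_open"

lemma openin_dual_topology:
  fixes U :: "('g::{topological_ab_group_add, metric_space} \<Rightarrow> complex) set"
  shows "openin dual_topology U \<longleftrightarrow> dual_open U"
proof -
  have "istopology (dual_open :: ('g \<Rightarrow> complex) set \<Rightarrow> bool)" by (rule istopology_dual_open)
  then have "openin (topology dual_open) = (dual_open :: ('g \<Rightarrow> complex) set \<Rightarrow> bool)"
    by (rule topology_inverse')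
  then show ?thesis unfolding dual_topology_def by simp
qed

end

theory Submission
  imports Defs
begin


lemma countable_base_sigma_compact:
  fixes \<C> :: "'g::metric_space set set"
  assumes "countable \<C>" "\<forall>C\<in>\<C>. compact C" "\<Union>\<C> = UNIV"
  shows "\<exists>B::'g set set. countable B \<and> (\<forall>b\<in>B. open b) \<and> (\<forall>S x. open S \<and> x \<in> S \<longrightarrow> (\<exists>b\<in>B. x \<in> b \<and> b \<subseteq> S))"
proof -
  have "\<forall>C\<in>\<C>. \<forall>n::nat. \<exists>F. finite F \<and> F \<subseteq> C \<and> C \<subseteq> (\<Union>x\<in>F. ball x (1 / Suc n))"
  proof (intro ballI allI)
    fix C n assume "C \<in> \<C>"
    then have "compact C" using assms by auto
    moreover have "C \<subseteq> (\<Union>x\<in>C. ball x (1 / Suc n))" by auto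
    ultimately obtain F where "F \<subseteq> C" "finite F" "C \<subseteq> (\<Union>x\<in>F. ball x (1 / Suc n))"
      using compactE_image[of C C "\<lambda>x. ball x (1 / Suc n)"] by auto
    then show "\<exists>F. finite F \<and> F \<subseteq> C \<and> C \<subseteq> (\<Union>x\<in>F. ball x (1 / Suc n))" by blast
  qed
  then obtain F where F: "\<And>C n. C \<in> \<C> \<Longrightarrow> finite (F C n) \<and> F C n \<subseteq> C \<and> C \<subseteq> (\<Union>x\<in>F C n. ball x (1 / Suc n))"
    by metis
  define D where "D = (\<Union>C\<in>\<C>. \<Union>n. F C n)"
  have cD: "countable D" unfolding D_def using assms(1) F
    by (intro countable_UN) (auto intro: countable_finite)
  define B where "B = (\<lambda>(d, n::nat). ball d (1 / Suc n)) ` (D \<times> UNIV)"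
  have P1: "countable B" unfolding B_def using cD by auto
  have P2: "\<forall>b\<in>B. open b" unfolding B_def by auto
  have P3: "\<forall>S x. open S \<and> x \<in> S \<longrightarrow> (\<exists>b\<in>B. x \<in> b \<and> b \<subseteq> S)"
  proof (intro allI impI)
    fix S :: "'g set" and x :: 'g assume Sx: "open S \<and> x \<in> S"
    then have "open S" "x \<in> S" by auto
    obtain e where e: "e > 0" "ball x e \<subseteq> S" using \<open>open S\<close> \<open>x \<in> S\<close> unfolding open_contains_ball by blast
    obtain n :: nat where n: "1 / Suc n < e / 2"
      using reals_Archimedean[of "e/2"] e(1) by (auto simp: inverse_eq_divide)
    obtain C where C: "C \<in> \<C>" "x \<in> C" using assms(3) by (metis UNIV_I Union_iff)
    then obtain d where d: "d \<in> F C n" "x \<in> ball d (1 / Suc n)" using F[OF C(1), of n] by blast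
    have "d \<in> D" unfolding D_def using C d by blast
    then have bB: "ball d (1 / Suc n) \<in> B" unfolding B_def by (intro image_eqI[of _ _ "(d, n)"]) auto
    have bS: "ball d (1 / Suc n) \<subseteq> S"
    proof
      fix y assume "y \<in> ball d (1 / Suc n)"
      then have "dist d y < 1 / Suc n" by simp
      moreover have "dist d x < 1 / Suc n" using d(2) by simp
      moreover have "dist x y \<le> dist d x + dist d y" by (rule dist_triangle3)
      ultimately have "dist x y < e" using n by linarith
      then show "y \<in> S" using e by auto
    qed
    show "\<exists>b\<in>B. x \<in> b \<and> b \<subseteq> S" by (rule bexI[OF _ bB]) (use bS d(2) in simp)
  qed
  show ?thesis by (intro exI[of _ B] conjI P1 P2 P3)
qed


lemma measurable_continuous_pair:
  fixes M :: "'g::metric_space measure" and B :: "'g set set" and \<phi> :: "'g \<times> 'g \<Rightarrow> 'h::topological_space"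
  assumes B: "countable B" "\<forall>b\<in>B. open b" "\<forall>S x. open S \<and> x \<in> S \<longrightarrow> (\<exists>b\<in>B. x \<in> b \<and> b \<subseteq> S)"
    and sM: "sets M = sets borel"
    and cont: "continuous_on UNIV \<phi>"
  shows "\<phi> \<in> borel_measurable (M \<Otimes>\<^sub>M M)"
proof (rule borel_measurableI)
  fix S :: "'h set" assume "open S"
  define Ob where "Ob = \<phi> -` S"
  have "open Ob" unfolding Ob_def using cont \<open>open S\<close> by (simp add: open_vimage)
  define R where "R = (\<lambda>p. fst p \<times> snd p) ` {p \<in> B \<times> B. fst p \<times> snd p \<subseteq> Ob}"
  have cBB: "countable (B \<times> B)" by (intro countable_SIGMA B(1))
  have "countable {p \<in> B \<times> B. fst p \<times> snd p \<subseteq> Ob}" by (rule countable_subset[OF _ cBB]) blast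
  then have "countable R" unfolding R_def by (rule countable_image)
  have eq: "Ob = \<Union>R"
  proof
    show "Ob \<subseteq> \<Union>R"
    proof
      fix z assume "z \<in> Ob"
      then obtain U V where UV: "open U" "open V" "z \<in> U \<times> V" "U \<times> V \<subseteq> Ob"
        using \<open>open Ob\<close> by (metis open_prod_elim)
      have zU: "fst z \<in> U" "snd z \<in> V" using UV(3) by (auto simp: mem_Times_iff)
      obtain b1 where b1: "b1 \<in> B" "fst z \<in> b1" "b1 \<subseteq> U" using B(3)[rule_format, OF conjI[OF UV(1) zU(1)]] by blast
      obtain b2 where b2: "b2 \<in> B" "snd z \<in> b2" "b2 \<subseteq> V" using B(3)[rule_format, OF conjI[OF UV(2) zU(2)]] by blast
      have "b1 \<times> b2 \<subseteq> Ob" using b1(3) b2(3) UV(4) by (meson Sigma_mono order_trans)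
      then have "b1 \<times> b2 \<in> R" unfolding R_def using b1(1) b2(1) by (intro image_eqI[of _ _ "(b1, b2)"]) simp_all
      moreover have "z \<in> b1 \<times> b2" using b1 b2 by (simp add: mem_Times_iff)
      ultimately show "z \<in> \<Union>R" by blast
    qed
  next
    show "\<Union>R \<subseteq> Ob" unfolding R_def by auto
  qed
  have "R \<subseteq> sets (M \<Otimes>\<^sub>M M)"
    unfolding R_def using B(2) sM by (auto intro!: pair_measureI)
  then have "\<Union>R \<in> sets (M \<Otimes>\<^sub>M M)" by (rule sets.countable_Union[OF \<open>countable R\<close>])
  moreover have "space (M \<Otimes>\<^sub>M M) = UNIV" using sets_eq_imp_space_eq[OF sM] by (simp add: space_pair_measure)
  ultimately show "\<phi> -` S \<inter> space (M \<Otimes>\<^sub>M M) \<in> sets (M \<Otimes>\<^sub>M M)" using eq Ob_def by simp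
qed


lemma haar_translate:
  fixes \<nu> :: "'g::{topological_ab_group_add, metric_space} measure"
  assumes haar: "haar_measure \<nu>"
  shows "distr \<nu> borel (\<lambda>x. x + t) = \<nu>"
proof -
  have sN: "sets \<nu> = sets borel" using haar unfolding haar_measure_def by auto
  have spN: "space \<nu> = UNIV" using sets_eq_imp_space_eq[OF sN] by simp
  have meas: "(\<lambda>x. x + t) \<in> measurable \<nu> borel"
    unfolding measurable_cong_sets[OF sN refl] by (auto intro!: borel_measurable_continuous_onI continuous_intros)
  show ?thesis
  proof (rule measure_eqI)
    show "sets (distr \<nu> borel (\<lambda>x. x + t)) = sets \<nu>" using sN by simp
    fix A assume "A \<in> sets (distr \<nu> borel (\<lambda>x. x + t))"
    then have A: "A \<in> sets borel" by simp
    have "(\<lambda>x. x + t) -` A \<inter> space \<nu> = (\<lambda>u. -t + u) ` A"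
      unfolding spN by (auto simp: image_iff) (metis add.commute diff_add_cancel uminus_add_conv_diff)
    moreover have "emeasure \<nu> ((\<lambda>u. -t + u) ` A) = emeasure \<nu> A"
      using haar A unfolding haar_measure_def by blast
    ultimately show "emeasure (distr \<nu> borel (\<lambda>x. x + t)) A = emeasure \<nu> A"
      by (simp only: emeasure_distr[OF meas A])
  qed
qed

lemma haar_translate_nn:
  fixes \<nu> :: "'g::{topological_ab_group_add, metric_space} measure"
  assumes haar: "haar_measure \<nu>" and h: "h \<in> borel_measurable borel"
  shows "(\<integral>\<^sup>+x. h (x + t) \<partial>\<nu>) = integral\<^sup>N \<nu> h"
proof -
  have sN: "sets \<nu> = sets borel" using haar unfolding haar_measure_def by auto
  have meas: "(\<lambda>x. x + t) \<in> measurable \<nu> borel"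
    unfolding measurable_cong_sets[OF sN refl] by (auto intro!: borel_measurable_continuous_onI continuous_intros)
  have "integral\<^sup>N (distr \<nu> borel (\<lambda>x. x + t)) h = (\<integral>\<^sup>+x. h (x + t) \<partial>\<nu>)"
    using h by (intro nn_integral_distr[OF meas]) simp
  then show ?thesis using haar_translate[OF haar] by simp
qed


lemma haar_fubini_identity:
  fixes \<nu> :: "'g::{topological_ab_group_add, metric_space} measure"
    and f g :: "'g \<Rightarrow> ennreal" and B :: "'g set set"
  assumes haar: "haar_measure \<nu>" and sf: "sigma_finite_measure \<nu>"
    and B: "countable B" "\<forall>b\<in>B. open b" "\<forall>S x. open S \<and> x \<in> S \<longrightarrow> (\<exists>b\<in>B. x \<in> b \<and> b \<subseteq> S)"
    and fb: "f \<in> borel_measurable borel" and gb: "g \<in> borel_measurable borel"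
  shows "(\<integral>\<^sup>+x. f x \<partial>\<nu>) * (\<integral>\<^sup>+y. g y \<partial>\<nu>) = (\<integral>\<^sup>+y. g y \<partial>\<nu>) * (\<integral>\<^sup>+y. f (- y) \<partial>\<nu>)"
proof -
  have sN: "sets \<nu> = sets borel" using haar unfolding haar_measure_def by auto
  interpret P: pair_sigma_finite \<nu> \<nu> unfolding pair_sigma_finite_def using sf by simp
  have mb: "measurable \<nu> X = measurable borel X" for X :: "'x measure"
    by (rule measurable_cong_sets[OF sN refl])
  have fm: "f \<in> borel_measurable \<nu>" and gm: "g \<in> borel_measurable \<nu>" using fb gb mb by auto
  have addm: "(\<lambda>p. fst p + snd p) \<in> borel_measurable (\<nu> \<Otimes>\<^sub>M \<nu>)"
    by (rule measurable_continuous_pair[OF B sN]) (intro continuous_intros)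
  have subm: "(\<lambda>p. fst p - snd p) \<in> borel_measurable (\<nu> \<Otimes>\<^sub>M \<nu>)"
    by (rule measurable_continuous_pair[OF B sN]) (intro continuous_intros)
  have m1: "(\<lambda>(x, y). f x * g (x + y)) \<in> borel_measurable (\<nu> \<Otimes>\<^sub>M \<nu>)"
  proof -
    have "(\<lambda>p. f (fst p)) \<in> borel_measurable (\<nu> \<Otimes>\<^sub>M \<nu>)" using measurable_compose[OF measurable_fst fm] .
    moreover have "(\<lambda>p. g (fst p + snd p)) \<in> borel_measurable (\<nu> \<Otimes>\<^sub>M \<nu>)" using measurable_compose[OF addm gb] .
    ultimately have "(\<lambda>p. f (fst p) * g (fst p + snd p)) \<in> borel_measurable (\<nu> \<Otimes>\<^sub>M \<nu>)"
      by (rule borel_measurable_times_ennreal)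
    then show ?thesis by (simp add: case_prod_beta')
  qed
  have m2: "(\<lambda>(x, y). f (x - y) * g x) \<in> borel_measurable (\<nu> \<Otimes>\<^sub>M \<nu>)"
  proof -
    have "(\<lambda>p. g (fst p)) \<in> borel_measurable (\<nu> \<Otimes>\<^sub>M \<nu>)" using measurable_compose[OF measurable_fst gm] .
    moreover have "(\<lambda>p. f (fst p - snd p)) \<in> borel_measurable (\<nu> \<Otimes>\<^sub>M \<nu>)" using measurable_compose[OF subm fb] .
    ultimately have "(\<lambda>p. f (fst p - snd p) * g (fst p)) \<in> borel_measurable (\<nu> \<Otimes>\<^sub>M \<nu>)"
      by (intro borel_measurable_times_ennreal)
    then show ?thesis by (simp add: case_prod_beta')
  qed
  have tr: "\<And>h t. h \<in> borel_measurable borel \<Longrightarrow> (\<integral>\<^sup>+x. h (x + t) \<partial>\<nu>) = integral\<^sup>N \<nu> h"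
    by (rule haar_translate_nn[OF haar])
  have cadd: "continuous_on UNIV (\<lambda>y::'g. x + y)" for x by (intro continuous_intros)
  have csub: "continuous_on UNIV (\<lambda>y::'g. x - y)" for x by (intro continuous_intros)
  have gxb: "(\<lambda>y. g (x + y)) \<in> borel_measurable borel" for x
    using measurable_compose[OF borel_measurable_continuous_onI[OF cadd] gb] .
  have fxb: "(\<lambda>y. f (x - y)) \<in> borel_measurable borel" for x
    using measurable_compose[OF borel_measurable_continuous_onI[OF csub] fb] .
  have fnb: "(\<lambda>y. f (- y)) \<in> borel_measurable borel"
    using measurable_compose[OF borel_measurable_continuous_onI[OF continuous_on_minus[OF continuous_on_id]] fb] .
  have "(\<integral>\<^sup>+x. f x \<partial>\<nu>) * (\<integral>\<^sup>+y. g y \<partial>\<nu>) = (\<integral>\<^sup>+x. f x * (\<integral>\<^sup>+y. g y \<partial>\<nu>) \<partial>\<nu>)"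
    by (rule nn_integral_multc[OF fm, symmetric])
  also have "\<dots> = (\<integral>\<^sup>+x. f x * (\<integral>\<^sup>+y. g (x + y) \<partial>\<nu>) \<partial>\<nu>)"
  proof (rule nn_integral_cong)
    fix x
    have "(\<integral>\<^sup>+y. g (y + x) \<partial>\<nu>) = integral\<^sup>N \<nu> g" by (rule tr[OF gb])
    then show "f x * (\<integral>\<^sup>+y. g y \<partial>\<nu>) = f x * (\<integral>\<^sup>+y. g (x + y) \<partial>\<nu>)" by (simp add: add.commute)
  qed
  also have "\<dots> = (\<integral>\<^sup>+x. (\<integral>\<^sup>+y. f x * g (x + y) \<partial>\<nu>) \<partial>\<nu>)"
  proof (rule nn_integral_cong)
    fix x
    have "(\<lambda>y. g (x + y)) \<in> borel_measurable \<nu>" using gxb mb by auto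
    then show "f x * (\<integral>\<^sup>+y. g (x + y) \<partial>\<nu>) = (\<integral>\<^sup>+y. f x * g (x + y) \<partial>\<nu>)"
      by (rule nn_integral_cmult[symmetric])
  qed
  also have "\<dots> = (\<integral>\<^sup>+y. (\<integral>\<^sup>+x. f x * g (x + y) \<partial>\<nu>) \<partial>\<nu>)"
    using P.Fubini'[OF m1] by simp
  also have "\<dots> = (\<integral>\<^sup>+y. (\<integral>\<^sup>+x. f (x - y) * g x \<partial>\<nu>) \<partial>\<nu>)"
  proof (rule nn_integral_cong)
    fix y
    have hb: "(\<lambda>x. f x * g (x + y)) \<in> borel_measurable borel"
      using fb measurable_compose[OF borel_measurable_continuous_onI[OF cadd[of y]] gb]
      by (simp add: add.commute borel_measurable_times_ennreal)
    have "(\<integral>\<^sup>+x. f (x + - y) * g (x + - y + y) \<partial>\<nu>) = (\<integral>\<^sup>+x. f x * g (x + y) \<partial>\<nu>)"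
      using tr[OF hb, of "- y"] by simp
    then show "(\<integral>\<^sup>+x. f x * g (x + y) \<partial>\<nu>) = (\<integral>\<^sup>+x. f (x - y) * g x \<partial>\<nu>)" by simp
  qed
  also have "\<dots> = (\<integral>\<^sup>+x. (\<integral>\<^sup>+y. f (x - y) * g x \<partial>\<nu>) \<partial>\<nu>)"
    using P.Fubini'[OF m2] by simp
  also have "\<dots> = (\<integral>\<^sup>+x. g x * (\<integral>\<^sup>+y. f (x - y) \<partial>\<nu>) \<partial>\<nu>)"
  proof (rule nn_integral_cong)
    fix x
    have fxm: "(\<lambda>y. f (x - y)) \<in> borel_measurable \<nu>" using fxb mb by auto
    show "(\<integral>\<^sup>+y. f (x - y) * g x \<partial>\<nu>) = g x * (\<integral>\<^sup>+y. f (x - y) \<partial>\<nu>)"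
      using nn_integral_multc[OF fxm, of "g x"] by (simp only: mult.commute)
  qed
  also have "\<dots> = (\<integral>\<^sup>+x. g x * (\<integral>\<^sup>+y. f (- y) \<partial>\<nu>) \<partial>\<nu>)"
  proof (rule nn_integral_cong)
    fix x
    have "(\<integral>\<^sup>+y. f (- (y + - x)) \<partial>\<nu>) = (\<integral>\<^sup>+y. f (- y) \<partial>\<nu>)" using tr[OF fnb, of "- x"] by simp
    then show "g x * (\<integral>\<^sup>+y. f (x - y) \<partial>\<nu>) = g x * (\<integral>\<^sup>+y. f (- y) \<partial>\<nu>)" by simp
  qed
  also have "\<dots> = (\<integral>\<^sup>+y. g y \<partial>\<nu>) * (\<integral>\<^sup>+y. f (- y) \<partial>\<nu>)"
    by (rule nn_integral_multc[OF gm])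
  finally show ?thesis .
qed

lemma haar_inversion:
  fixes \<nu> :: "'g::{topological_ab_group_add, metric_space} measure"
  assumes haar: "haar_measure \<nu>"
    and sc: "\<exists>\<C>. countable \<C> \<and> (\<forall>C\<in>\<C>. compact C) \<and> \<Union>\<C> = (UNIV :: 'g set)"
  shows "distr \<nu> borel uminus = \<nu>"
proof -
  from sc obtain \<C> :: "'g set set" where C': "countable \<C> \<and> (\<forall>C\<in>\<C>. compact C) \<and> \<Union>\<C> = UNIV" ..
  note C = C'[THEN conjunct1] C'[THEN conjunct2, THEN conjunct1] C'[THEN conjunct2, THEN conjunct2]
  obtain B :: "'g set set" where B: "countable B" "\<forall>b\<in>B. open b" "\<forall>S x. open S \<and> x \<in> S \<longrightarrow> (\<exists>b\<in>B. x \<in> b \<and> b \<subseteq> S)"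
    using countable_base_sigma_compact[OF C] by blast
  have sN: "sets \<nu> = sets borel" using haar unfolding haar_measure_def by auto
  have spN: "space \<nu> = UNIV" using sets_eq_imp_space_eq[OF sN] by simp
  have fin: "emeasure \<nu> K < \<infinity>" if "compact K" for K using haar that unfolding haar_measure_def by auto
  have Csets: "C \<in> sets \<nu>" if "C \<in> \<C>" for C
    using C(2) that sN by (auto intro: borel_closed compact_imp_closed)
  have sf: "sigma_finite_measure \<nu>"
  proof
    show "\<exists>A. countable A \<and> A \<subseteq> sets \<nu> \<and> \<Union>A = space \<nu> \<and> (\<forall>a\<in>A. emeasure \<nu> a \<noteq> \<infinity>)"
      using C Csets fin spN by (intro exI[of _ \<C>] conjI) (auto simp: less_top[symmetric])
  qed
  have "\<exists>C0\<in>\<C>. emeasure \<nu> C0 \<noteq> 0"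
  proof (rule ccontr)
    assume "\<not> (\<exists>C0\<in>\<C>. emeasure \<nu> C0 \<noteq> 0)"
    then have z: "\<And>C. C \<in> \<C> \<Longrightarrow> emeasure \<nu> C = 0" by blast
    have "\<And>C. C \<in> \<C> \<Longrightarrow> C \<in> null_sets \<nu>" using z Csets by (simp add: null_sets_def)
    then have "(\<Union>C\<in>\<C>. C) \<in> null_sets \<nu>" by (rule null_sets_UN'[OF C(1)])
    then have "emeasure \<nu> UNIV = 0" using C(3) by (simp add: null_sets_def)
    moreover have "emeasure \<nu> UNIV > 0" using haar unfolding haar_measure_def by auto
    ultimately show False by simp
  qed
  then obtain C0 where C0: "C0 \<in> \<C>" "emeasure \<nu> C0 \<noteq> 0" by blast
  have "compact C0" using C(2) C0(1) by blast
  then have C0fin: "emeasure \<nu> C0 \<noteq> \<infinity>" using fin by (simp add: less_top[symmetric])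
  have negm: "uminus \<in> measurable \<nu> (borel :: 'g measure)"
    unfolding measurable_cong_sets[OF sN refl]
    by (intro borel_measurable_continuous_onI continuous_intros)
  have eqA: "emeasure \<nu> (uminus -` A) = emeasure \<nu> A" if A: "A \<in> sets borel" for A :: "'g set"
  proof -
    have Ab: "indicator A \<in> (borel_measurable borel :: ('g \<Rightarrow> ennreal) set)" using A by simp
    have Cb: "indicator C0 \<in> (borel_measurable borel :: ('g \<Rightarrow> ennreal) set)" using Csets[OF C0(1)] sN by simp
    have "(\<integral>\<^sup>+x. indicator A x \<partial>\<nu>) * (\<integral>\<^sup>+y. indicator C0 y \<partial>\<nu>) = (\<integral>\<^sup>+y. indicator C0 y \<partial>\<nu>) * (\<integral>\<^sup>+y. indicator A (- y) \<partial>\<nu>)"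
      by (rule haar_fubini_identity[OF haar sf B Ab Cb])
    moreover have "(\<integral>\<^sup>+x. indicator A x \<partial>\<nu>) = emeasure \<nu> A" using A sN by simp
    moreover have "(\<integral>\<^sup>+y. indicator C0 y \<partial>\<nu>) = emeasure \<nu> C0" using Csets[OF C0(1)] by simp
    moreover have "(\<integral>\<^sup>+y. indicator A (- y) \<partial>\<nu>) = emeasure \<nu> (uminus -` A)"
    proof -
      have mA: "uminus -` A \<in> sets \<nu>" using measurable_sets[OF negm A] spN by simp
      have "(\<lambda>y. indicator A (- y) :: ennreal) = indicator (uminus -` A)" by (rule ext) (simp add: indicator_def)
      then show ?thesis using mA by simp
    qed
    ultimately have "emeasure \<nu> A * emeasure \<nu> C0 = emeasure \<nu> (uminus -` A) * emeasure \<nu> C0"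
      by (simp add: mult.commute)
    then have "emeasure \<nu> A * emeasure \<nu> C0 / emeasure \<nu> C0 = emeasure \<nu> (uminus -` A) * emeasure \<nu> C0 / emeasure \<nu> C0"
      by simp
    then show ?thesis using C0(2) C0fin by (simp add: ennreal_mult_divide_eq)
  qed
  show ?thesis
  proof (rule measure_eqI)
    show "sets (distr \<nu> borel uminus) = sets \<nu>" using sN by simp
    fix A assume "A \<in> sets (distr \<nu> borel uminus)"
    then have A: "A \<in> sets borel" by simp
    show "emeasure (distr \<nu> borel uminus) A = emeasure \<nu> A"
      using eqA[OF A] by (simp add: emeasure_distr[OF negm A] spN)
  qed
qed

lemma dual_group_props:
  fixes \<xi> :: "'g::{topological_ab_group_add, metric_space} \<Rightarrow> complex"
  assumes "\<xi> \<in> dual_group"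
  shows "\<And>u. cmod (\<xi> u) = 1" and "\<And>u. \<xi> (- u) = cnj (\<xi> u)" and "\<xi> \<in> borel_measurable borel"
proof -
  have c: "continuous_on UNIV \<xi>" and n: "\<And>x. cmod (\<xi> x) = 1" and m: "\<And>x y. \<xi> (x + y) = \<xi> x * \<xi> y"
    using assms unfolding dual_group_def by auto
  show "\<And>u. cmod (\<xi> u) = 1" by (rule n)
  show "\<xi> \<in> borel_measurable borel" using c by (rule borel_measurable_continuous_onI)
  have z: "\<xi> 0 = 1"
  proof -
    have "\<xi> 0 = \<xi> 0 * \<xi> 0" using m[of 0 0] by simp
    moreover have "\<xi> 0 \<noteq> 0" using n[of 0] by auto
    ultimately show ?thesis by (metis mult_cancel_left2)
  qed
  fix u
  have "\<xi> u * \<xi> (- u) = 1" using m[of u "- u"] z by simp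
  moreover have "\<xi> u * cnj (\<xi> u) = 1"
    using complex_norm_square[of "\<xi> u"] n[of u] by simp
  ultimately have "\<xi> u * \<xi> (- u) = \<xi> u * cnj (\<xi> u)" by simp
  moreover have "\<xi> u \<noteq> 0" using n[of u] by auto
  ultimately show "\<xi> (- u) = cnj (\<xi> u)" by simp
qed

lemma L_real:
  fixes \<nu> :: "'g::{topological_ab_group_add, metric_space} measure" and k :: "'g \<Rightarrow> complex"
  assumes inv: "distr \<nu> borel uminus = \<nu>" and sN: "sets \<nu> = sets borel"
    and km: "k \<in> borel_measurable borel" and herm: "\<And>u. k (- u) = cnj (k u)"
    and xi: "\<xi> \<in> dual_group"
  shows "Im (\<integral>u. k u * cnj (\<xi> u) \<partial>\<nu>) = 0"
proof -
  have negm: "uminus \<in> measurable \<nu> (borel :: 'g measure)"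
    unfolding measurable_cong_sets[OF sN refl]
    by (intro borel_measurable_continuous_onI continuous_intros)
  have xm: "\<xi> \<in> borel_measurable borel" using dual_group_props(3)[OF xi] .
  define h where "h u = k u * cnj (\<xi> u)" for u
  have "continuous_on UNIV \<xi>" using xi unfolding dual_group_def by auto
  then have "continuous_on UNIV (\<lambda>x. cnj (\<xi> x))" by (intro continuous_intros)
  then have cm: "(\<lambda>x. cnj (\<xi> x)) \<in> borel_measurable borel" by (rule borel_measurable_continuous_onI)
  have hm: "h \<in> borel_measurable borel" unfolding h_def using km cm by (rule borel_measurable_times)
  have "integral\<^sup>L (distr \<nu> borel uminus) h = (\<integral>u. h (- u) \<partial>\<nu>)"
    by (rule integral_distr[OF negm hm])
  then have eq: "(\<integral>u. h (- u) \<partial>\<nu>) = integral\<^sup>L \<nu> h" using inv by simp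
  have "h (- u) = cnj (h u)" for u
    unfolding h_def herm dual_group_props(2)[OF xi] by simp
  then have "cnj (integral\<^sup>L \<nu> h) = integral\<^sup>L \<nu> h" using eq by simp
  then have "Im (integral\<^sup>L \<nu> h) = 0" by (metis Reals_cnj_iff complex_is_Real_iff)
  then show ?thesis unfolding h_def .
qed

lemma L_cont:
  fixes \<nu> :: "'g::{topological_ab_group_add, metric_space} measure" and k :: "'g \<Rightarrow> complex"
    and \<xi>0 :: "'g \<Rightarrow> complex"
  assumes sN: "sets \<nu> = sets borel"
    and sc: "\<exists>\<C>. countable \<C> \<and> (\<forall>C\<in>\<C>. compact C) \<and> \<Union>\<C> = (UNIV :: 'g set)"
    and km: "k \<in> borel_measurable borel" and ki: "integrable \<nu> k"
    and x0: "\<xi>0 \<in> dual_group" and r: "r > 0"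
  shows "\<exists>Kc e. compact Kc \<and> e > 0 \<and> (\<forall>\<xi>\<in>dual_group. (\<forall>x\<in>Kc. cmod (\<xi> x - \<xi>0 x) < e) \<longrightarrow>
           cmod ((\<integral>u. k u * cnj (\<xi> u) \<partial>\<nu>) - (\<integral>u. k u * cnj (\<xi>0 u) \<partial>\<nu>)) < r)"
proof -
  from sc obtain \<C> :: "'g set set" where C': "countable \<C> \<and> (\<forall>C\<in>\<C>. compact C) \<and> \<Union>\<C> = UNIV" ..
  note C = C'[THEN conjunct1] C'[THEN conjunct2, THEN conjunct1] C'[THEN conjunct2, THEN conjunct2]
  have ne: "\<C> \<noteq> {}" using C(3) by auto
  have mb: "measurable \<nu> X = measurable borel X" for X :: "'x measure"
    by (rule measurable_cong_sets[OF sN refl])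
  define D where "D n = (\<Union>i\<in>{..n}. from_nat_into \<C> i)" for n
  have Dc: "compact (D n)" for n
    unfolding D_def using C(2) from_nat_into[OF ne] by (intro compact_UN) auto
  have Dev: "\<exists>N. \<forall>n\<ge>N. u \<in> D n" for u
  proof -
    obtain C0 where "C0 \<in> \<C>" "u \<in> C0" using C(3) by (metis UNIV_I Union_iff)
    moreover have "range (from_nat_into \<C>) = \<C>" using ne C(1) by simp
    ultimately obtain N where "u \<in> from_nat_into \<C> N" by (metis imageE)
    then show ?thesis unfolding D_def by (intro exI[of _ N]) auto
  qed
  have kmn: "k \<in> borel_measurable \<nu>" using km mb by auto
  have wi: "integrable \<nu> (\<lambda>u. cmod (k u))" using ki by (rule integrable_norm)
  define s where "s n u = cmod (k u) * indicator (- D n) u" for n u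
  have Dsets: "- D n \<in> sets \<nu>" for n
    using Dc[of n] sN by (auto intro: borel_open compact_imp_closed)
  have sm: "s n \<in> borel_measurable \<nu>" for n
    unfolding s_def[abs_def] using Dsets[of n] kmn by measurable
  have si: "integrable \<nu> (s n)" for n
    by (rule Bochner_Integration.integrable_bound[OF wi sm]) (rule AE_I2, auto simp: s_def indicator_def)
  have lim: "(\<lambda>n. integral\<^sup>L \<nu> (s n)) \<longlonglongrightarrow> integral\<^sup>L \<nu> (\<lambda>u. 0::real)"
  proof (rule integral_dominated_convergence[where w = "\<lambda>u. cmod (k u)"])
    show "(\<lambda>u. 0::real) \<in> borel_measurable \<nu>" by simp
    show "s n \<in> borel_measurable \<nu>" for n by (rule sm)
    show "integrable \<nu> (\<lambda>u. cmod (k u))" by (rule wi)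
    show "AE x in \<nu>. (\<lambda>n. s n x) \<longlonglongrightarrow> 0"
    proof (rule AE_I2)
      fix u
      obtain N where "\<forall>n\<ge>N. u \<in> D n" using Dev by blast
      then have "eventually (\<lambda>n. s n u = 0) sequentially"
        unfolding s_def eventually_sequentially by (intro exI[of _ N]) (auto simp: indicator_def)
      then show "(\<lambda>n. s n u) \<longlonglongrightarrow> 0" by (rule tendsto_eventually)
    qed
    show "AE x in \<nu>. norm (s n x) \<le> cmod (k x)" for n
      by (rule AE_I2) (auto simp: s_def indicator_def)
  qed
  then have "eventually (\<lambda>n. integral\<^sup>L \<nu> (s n) < r / 4) sequentially"
    using r by (intro order_tendstoD(2)[OF lim]) simp
  then obtain N where N: "integral\<^sup>L \<nu> (s N) < r / 4" unfolding eventually_sequentially by blast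
  define Mk where "Mk = (\<integral>u. cmod (k u) \<partial>\<nu>)"
  have Mk0: "Mk \<ge> 0" unfolding Mk_def by simp
  define e where "e = r / (2 * (Mk + 1))"
  have e0: "e > 0" unfolding e_def using r Mk0 by simp
  have eMk: "e * Mk < r / 2"
  proof -
    have "e * Mk = r / 2 * (Mk / (Mk + 1))" unfolding e_def by (simp add: field_simps)
    moreover have "Mk / (Mk + 1) < 1" using Mk0 by simp
    moreover have "r / 2 * (Mk / (Mk + 1)) < r / 2 * 1"
      using \<open>Mk / (Mk + 1) < 1\<close> r by (intro mult_strict_left_mono) auto
    ultimately show ?thesis by simp
  qed
  have cxm: "(\<lambda>u. cnj (\<xi> u)) \<in> borel_measurable \<nu>" if "\<xi> \<in> dual_group" for \<xi> :: "'g \<Rightarrow> complex"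
  proof -
    have "continuous_on UNIV \<xi>" using that unfolding dual_group_def by auto
    then have "continuous_on UNIV (\<lambda>x. cnj (\<xi> x))" by (intro continuous_intros)
    then show ?thesis using mb by (auto intro: borel_measurable_continuous_onI)
  qed
  have kxi: "integrable \<nu> (\<lambda>u. k u * cnj (\<xi> u))" if "\<xi> \<in> dual_group" for \<xi> :: "'g \<Rightarrow> complex"
  proof (rule Bochner_Integration.integrable_bound[OF ki])
    show "(\<lambda>u. k u * cnj (\<xi> u)) \<in> borel_measurable \<nu>" using kmn cxm[OF that] by (rule borel_measurable_times)
    show "AE x in \<nu>. norm (k x * cnj (\<xi> x)) \<le> norm (k x)"
      by (rule AE_I2) (simp add: norm_mult dual_group_props(1)[OF that])
  qed
  show ?thesis
  proof (intro exI[of _ "D N"] exI[of _ e] conjI Dc e0 ballI impI)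
    fix \<xi> :: "'g \<Rightarrow> complex" assume xi: "\<xi> \<in> dual_group" and close: "\<forall>x\<in>D N. cmod (\<xi> x - \<xi>0 x) < e"
    define F where "F u = k u * cnj (\<xi> u) - k u * cnj (\<xi>0 u)" for u
    have Fi: "integrable \<nu> F" unfolding F_def using kxi[OF xi] kxi[OF x0] by (rule Bochner_Integration.integrable_diff)
    have "(\<integral>u. k u * cnj (\<xi> u) \<partial>\<nu>) - (\<integral>u. k u * cnj (\<xi>0 u) \<partial>\<nu>) = integral\<^sup>L \<nu> F"
      unfolding F_def using kxi[OF xi] kxi[OF x0] by (rule Bochner_Integration.integral_diff[symmetric])
    then have "cmod ((\<integral>u. k u * cnj (\<xi> u) \<partial>\<nu>) - (\<integral>u. k u * cnj (\<xi>0 u) \<partial>\<nu>)) \<le> (\<integral>u. norm (F u) \<partial>\<nu>)"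
      by simp
    also have "\<dots> \<le> (\<integral>u. e * cmod (k u) + 2 * s N u \<partial>\<nu>)"
    proof (rule Bochner_Integration.integral_mono)
      show "integrable \<nu> (\<lambda>u. norm (F u))" using Fi by (rule integrable_norm)
      show "integrable \<nu> (\<lambda>u. e * cmod (k u) + 2 * s N u)"
        using wi si[of N] by (intro Bochner_Integration.integrable_add Bochner_Integration.integrable_mult_right)
      fix u
      have nF: "norm (F u) = cmod (k u) * cmod (\<xi> u - \<xi>0 u)"
      proof -
        have "F u = k u * cnj (\<xi> u - \<xi>0 u)" unfolding F_def by (simp only: complex_cnj_diff right_diff_distrib)
        moreover have "cnj (\<xi> u - \<xi>0 u) = cnj (\<xi> u) - cnj (\<xi>0 u)" by simp
        ultimately show ?thesis by (metis complex_mod_cnj norm_mult)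
      qed
      show "norm (F u) \<le> e * cmod (k u) + 2 * s N u"
      proof (cases "u \<in> D N")
        case True
        then have "cmod (\<xi> u - \<xi>0 u) \<le> e" using close by (simp add: less_imp_le)
        then have "cmod (k u) * cmod (\<xi> u - \<xi>0 u) \<le> cmod (k u) * e" by (rule mult_left_mono) simp
        moreover have "s N u \<ge> 0" unfolding s_def by simp
        ultimately show ?thesis using nF by (simp add: mult.commute)
      next
        case False
        have "cmod (\<xi> u - \<xi>0 u) \<le> cmod (\<xi> u) + cmod (\<xi>0 u)" by (rule norm_triangle_ineq4)
        then have "cmod (\<xi> u - \<xi>0 u) \<le> 2"
          using dual_group_props(1)[OF xi, of u] dual_group_props(1)[OF x0, of u] by simp
        then have "cmod (k u) * cmod (\<xi> u - \<xi>0 u) \<le> cmod (k u) * 2" by (rule mult_left_mono) simp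
        moreover have "s N u = cmod (k u)" unfolding s_def using False by simp
        moreover have "e * cmod (k u) \<ge> 0" using e0 by simp
        ultimately show ?thesis using nF by simp
      qed
    qed
    also have "\<dots> = e * Mk + 2 * integral\<^sup>L \<nu> (s N)"
      unfolding Mk_def using wi si[of N]
      by (subst Bochner_Integration.integral_add) (auto intro: Bochner_Integration.integrable_mult_right)
    also have "\<dots> < r" using eMk N by simp
    finally show "cmod ((\<integral>u. k u * cnj (\<xi> u) \<partial>\<nu>) - (\<integral>u. k u * cnj (\<xi>0 u) \<partial>\<nu>)) < r" .
  qed
qed

theorem proposition3p1:
  fixes \<nu> :: "'g::{topological_ab_group_add, metric_space} measure"
    and lam :: "'y measure"
    and H :: "('g \<times> 'y \<Rightarrow> complex) set"
    and K :: "'g \<Rightarrow> 'y \<Rightarrow> 'g \<Rightarrow> 'y \<Rightarrow> complex"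
    and L :: "('g \<Rightarrow> complex) \<Rightarrow> 'y \<Rightarrow> 'y \<Rightarrow> complex"
    and \<Omega> :: "('g \<Rightarrow> complex) set"
  assumes loc_compact: "locally_compact_space (euclidean :: 'g topology)"
    and sigma_compact: "\<exists>\<C>. countable \<C> \<and> (\<forall>C\<in>\<C>. compact C) \<and> \<Union>\<C> = (UNIV :: 'g set)"
    and haar: "haar_measure \<nu>"
    and sigma_finite: "sigma_finite_measure lam"
    and sep_G: "L2_separable \<nu>"
    and sep_Y: "L2_separable lam"
    and rkhs: "rkhs_L2 (\<nu> \<Otimes>\<^sub>M lam) H (\<lambda>z w. K (fst z) (snd z) (fst w) (snd w))"
    and shift: "\<And>u x v y. v \<in> space lam \<Longrightarrow> y \<in> space lam \<Longrightarrow> K x y u v = K 0 y (u - x) v"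
    and L1_bound: "\<And>y. y \<in> space lam \<Longrightarrow>
        (SUP v\<in>space lam. \<integral>\<^sup>+ u. ennreal (cmod (K 0 y u v)) \<partial>\<nu>) < \<infinity>"
    and L_def: "\<And>\<xi> y v. L \<xi> y v = (\<integral>u. K 0 y u v * cnj (\<xi> u) \<partial>\<nu>)"
    and Omega_def: "\<Omega> = {\<xi> \<in> dual_group. \<exists>y\<in>space lam. Im (L \<xi> y y) = 0 \<and> Re (L \<xi> y y) > 0}"
  shows "openin dual_topology \<Omega>"
proof -
  have sN: "sets \<nu> = sets borel" using haar unfolding haar_measure_def by auto
  have spN: "space \<nu> = UNIV" using sets_eq_imp_space_eq[OF sN] by simp
  have inv: "distr \<nu> borel uminus = \<nu>" by (rule haar_inversion[OF haar sigma_compact])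
  have mb: "measurable \<nu> X = measurable borel X" for X :: "'x measure"
    by (rule measurable_cong_sets[OF sN refl])
  have spM: "space (\<nu> \<Otimes>\<^sub>M lam) = UNIV \<times> space lam" by (simp add: space_pair_measure spN)
  have Hsq: "\<forall>f\<in>H. square_integrable (\<nu> \<Otimes>\<^sub>M lam) f"
    and Kin: "\<forall>z\<in>space (\<nu> \<Otimes>\<^sub>M lam). (\<lambda>w. K (fst z) (snd z) (fst w) (snd w)) \<in> H"
    and repr: "\<forall>f\<in>H. \<forall>z\<in>space (\<nu> \<Otimes>\<^sub>M lam). f z = (\<integral>w. f w * cnj (K (fst z) (snd z) (fst w) (snd w)) \<partial>(\<nu> \<Otimes>\<^sub>M lam))"
    using rkhs unfolding rkhs_L2_def by auto
  have km: "(\<lambda>u. K 0 y u y) \<in> borel_measurable borel" if y: "y \<in> space lam" for y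
  proof -
    have "(0, y) \<in> space (\<nu> \<Otimes>\<^sub>M lam)" using y spM by simp
    then have "(\<lambda>w. K 0 y (fst w) (snd w)) \<in> H" using Kin by force
    then have "(\<lambda>w. K 0 y (fst w) (snd w)) \<in> borel_measurable (\<nu> \<Otimes>\<^sub>M lam)"
      using Hsq unfolding square_integrable_def by blast
    from measurable_compose[OF measurable_Pair2'[OF y] this]
    have "(\<lambda>u. K 0 y u y) \<in> borel_measurable \<nu>" by simp
    then show ?thesis by (simp only: mb)
  qed
  have herm: "K 0 y (- u) y = cnj (K 0 y u y)" if y: "y \<in> space lam" for y u
  proof -
    have z1: "(0, y) \<in> space (\<nu> \<Otimes>\<^sub>M lam)" and z2: "(- u, y) \<in> space (\<nu> \<Otimes>\<^sub>M lam)"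
      using y spM by auto
    have f1: "(\<lambda>w. K 0 y (fst w) (snd w)) \<in> H" using Kin z1 by force
    have f2: "(\<lambda>w. K (- u) y (fst w) (snd w)) \<in> H" using Kin z2 by force
    have e1: "K (- u) y 0 y = (\<integral>w. K (- u) y (fst w) (snd w) * cnj (K 0 y (fst w) (snd w)) \<partial>(\<nu> \<Otimes>\<^sub>M lam))"
      using repr f2 z1 by force
    have e2: "K 0 y (- u) y = (\<integral>w. K 0 y (fst w) (snd w) * cnj (K (- u) y (fst w) (snd w)) \<partial>(\<nu> \<Otimes>\<^sub>M lam))"
      using repr f1 z2 by force
    have "cnj (K (- u) y 0 y) = (\<integral>w. cnj (K (- u) y (fst w) (snd w) * cnj (K 0 y (fst w) (snd w))) \<partial>(\<nu> \<Otimes>\<^sub>M lam))"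
      unfolding e1 by (rule Bochner_Integration.integral_cnj[symmetric])
    also have "\<dots> = (\<integral>w. K 0 y (fst w) (snd w) * cnj (K (- u) y (fst w) (snd w)) \<partial>(\<nu> \<Otimes>\<^sub>M lam))"
      by (rule Bochner_Integration.integral_cong) (simp_all add: mult.commute)
    also have "\<dots> = K 0 y (- u) y" using e2 by simp
    finally have "cnj (K (- u) y 0 y) = K 0 y (- u) y" .
    moreover have "K (- u) y 0 y = K 0 y u y" using shift[OF y y, of "- u" 0] by simp
    ultimately show ?thesis by simp
  qed
  have ki: "integrable \<nu> (\<lambda>u. K 0 y u y)" if y: "y \<in> space lam" for y
  proof (rule integrableI_bounded)
    show "(\<lambda>u. K 0 y u y) \<in> borel_measurable \<nu>" using km[OF y] by (simp only: mb)
    have "(\<integral>\<^sup>+ u. ennreal (cmod (K 0 y u y)) \<partial>\<nu>) \<le> (SUP v\<in>space lam. \<integral>\<^sup>+ u. ennreal (cmod (K 0 y u v)) \<partial>\<nu>)"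
      using y by (rule SUP_upper)
    also have "\<dots> < \<infinity>" using L1_bound[OF y] .
    finally show "(\<integral>\<^sup>+ u. ennreal (norm (K 0 y u y)) \<partial>\<nu>) < \<infinity>" by simp
  qed
  have Lreal: "Im (L \<xi> y y) = 0" if y: "y \<in> space lam" and xi: "\<xi> \<in> dual_group" for \<xi> y
    unfolding L_def using L_real[OF inv sN km[OF y] herm[OF y] xi] .
  show ?thesis
    unfolding openin_dual_topology dual_open_def
  proof (intro conjI ballI)
    show "\<Omega> \<subseteq> dual_group" unfolding Omega_def by blast
  next
    fix \<xi>0 assume "\<xi>0 \<in> \<Omega>"
    then obtain y where x0: "\<xi>0 \<in> dual_group" and y: "y \<in> space lam" and pos: "Re (L \<xi>0 y y) > 0"
      unfolding Omega_def by blast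
    obtain Kc e where Kc: "compact Kc" "e > 0"
      and cl: "\<forall>\<xi>\<in>dual_group. (\<forall>x\<in>Kc. cmod (\<xi> x - \<xi>0 x) < e) \<longrightarrow>
           cmod ((\<integral>u. K 0 y u y * cnj (\<xi> u) \<partial>\<nu>) - (\<integral>u. K 0 y u y * cnj (\<xi>0 u) \<partial>\<nu>)) < Re (L \<xi>0 y y)"
      using L_cont[OF sN sigma_compact km[OF y] ki[OF y] x0 pos] by blast
    show "\<exists>K e. compact K \<and> e > 0 \<and> {\<xi> \<in> dual_group. \<forall>x\<in>K. cmod (\<xi> x - \<xi>0 x) < e} \<subseteq> \<Omega>"
    proof (intro exI[of _ Kc] exI[of _ e] conjI Kc subsetI)
      fix \<xi> assume "\<xi> \<in> {\<xi> \<in> dual_group. \<forall>x\<in>Kc. cmod (\<xi> x - \<xi>0 x) < e}"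
      then have xi: "\<xi> \<in> dual_group" and c: "\<forall>x\<in>Kc. cmod (\<xi> x - \<xi>0 x) < e" by auto
      have d: "cmod (L \<xi> y y - L \<xi>0 y y) < Re (L \<xi>0 y y)" using cl xi c unfolding L_def by blast
      have "Re (L \<xi>0 y y) - Re (L \<xi> y y) \<le> cmod (L \<xi> y y - L \<xi>0 y y)"
        using abs_Re_le_cmod[of "L \<xi> y y - L \<xi>0 y y"] by simp
      then have "Re (L \<xi> y y) > 0" using d by linarith
      moreover have "Im (L \<xi> y y) = 0" by (rule Lreal[OF y xi])
      ultimately show "\<xi> \<in> \<Omega>" unfolding Omega_def using xi y by blast
    qed
  qed
qed

end
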